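(* Let $n,T,p\ge 1$, let $\alpha\in(0,\tfrac12)$, $\pi>1$, $c>0$, and let $\bar c\ge \underline{c}>0$ and $c_m>0$ be constants. Suppose the covariate vectors $X^{zt}\in[0,1]^p$ ($z\in[n]$, $t\in[T]$) satisfy the following coverage condition: for every pair $x^{(1)}\le x^{(2)}$ in $[0,1]^p$ (componentwise), with $V:=\prod_{j=1}^p (x^{(2)}_j-x^{(1)}_j)$ and $M:=\sqrt{\frac{\ln(nT)(p+1)}{\min(n,T)}}$, $$\underline{c}\,V-c_mM\;\le\;\frac{\#\{(z,t): x^{(1)}\le X^{zt}\le x^{(2)}\}}{nT}\;\le\;\bar c\,V+c_mM .$$ Let $\mathbb T$ be an $\alpha$-regular, fair-split regression tree (with parameter $\pi$) on the $nT$ observations, with $\ell$ leaves, each of depth at least $c\log \ell$, and suppose $\ell\le \left(\frac{\alpha}{2c_mM}\right)^{\frac{1}{c\log(1/\alpha)}}$. Let $\mathcal T_1^\star,\dots,\mathcal T_q^\star:[0,1]^p\to\mathbb R$ be Lipschitz functions, $\mathcal T_i^\star$ having Lipschitz constant $L_i$. Then for each $i\in[q]$ and each leaf of $\mathbb T$, letting $C$ be the set of observations in that leaf, $$\max_{(z_1,t_1),(z_2,t_2)\in C}\left|\mathcal T_i^\star(X^{z_1t_1})-\mathcal T_i^\star(X^{z_2t_2})\right|\le \frac{2L_i\sqrt p}{\ell^{s}},\qquad s:=\frac{c}{(\pi+1)p}\cdot\frac{\alpha\,\underline{c}}{4\bar c}.$$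
   Context: Panel data: $n$ units observed over $T$ time periods; observation $(z,t)$ has covariate vector $X^{zt}=(X_{1zt},\dots,X_{pzt})\in[0,1]^p$. There are $q$ treatments encoded by binary matrices $W_1,\dots,W_q\in\{0,1\}^{n\times T}$ (entry $(z,t)$ is 1 if observation $(z,t)$ receives the treatment); $\mathcal T_i^\star(X^{zt})$ is the effect of treatment $i$ on observation $(z,t)$. A regression tree here is a binary tree whose root contains all $nT$ observations and each internal node splits its set of observations into two children by comparing a single covariate $j$ to a threshold $x$ (observations with $X_{jzt}\le x$ versus $X_{jzt}>x$); the leaves partition the observations into clusters. The tree is $\alpha$-regular if every split sends at least a fraction $\alpha$ of the node's observations to each child, and each child contains at least one treated observation. The tree is a fair-split tree (with parameter $\pi>1$) if, for any node, whenever a covariate $j$ has not been used in the splits of its last $\pi p$ ancestor nodes, the next split at that node must use covariate $j$ (ties between several such covariates broken arbitrarily). Lipschitz is with respect to the Euclidean norm. *)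

theory Defs
  imports "HOL-Analysis.Analysis"
begin

text \<open>Observations are pairs (z,t). Covariate vectors live in real^'p, so p = CARD('p)
  and the norm is the Euclidean one.\<close>

type_synonym obs = "nat \<times> nat"

text \<open>A regression tree: a leaf, or a split on covariate j at threshold x
  (left child: X_j \<le> x, right child: X_j > x).\<close>
datatype 'p rtree = Leaf | Node 'p real "'p rtree" "'p rtree"

fun num_leaves :: "'p rtree \<Rightarrow> nat" where
  "num_leaves Leaf = 1"
| "num_leaves (Node j x l r) = num_leaves l + num_leaves r"

fun leaf_clusters ::
  "(obs \<Rightarrow> real^'p) \<Rightarrow> 'p rtree \<Rightarrow> obs set \<Rightarrow> nat \<Rightarrow> (obs set \<times> nat) set" where
  "leaf_clusters X Leaf S d = {(S, d)}"
| "leaf_clusters X (Node j x l r) S d =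
     leaf_clusters X l {w \<in> S. X w $ j \<le> x} (Suc d) \<union>
     leaf_clusters X r {w \<in> S. X w $ j > x} (Suc d)"

text \<open>\<alpha>-regularity: every split sends at least a fraction \<alpha> of the node's observations
  to each child, and each child contains, for every treatment i < q, an observation
  receiving treatment i.\<close>
fun alpha_regular ::
  "(obs \<Rightarrow> real^'p) \<Rightarrow> (nat \<Rightarrow> obs \<Rightarrow> bool) \<Rightarrow> nat \<Rightarrow> real \<Rightarrow> 'p rtree \<Rightarrow> obs set \<Rightarrow> bool" where
  "alpha_regular X W q \<alpha> Leaf S = True"
| "alpha_regular X W q \<alpha> (Node j x l r) S =
     (let SL = {w \<in> S. X w $ j \<le> x}; SR = {w \<in> S. X w $ j > x} in
        \<alpha> * real (card S) \<le> real (card SL) \<and> \<alpha> * real (card S) \<le> real (card SR) \<and>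
        (\<forall>i<q. \<exists>w\<in>SL. W i w) \<and> (\<forall>i<q. \<exists>w\<in>SR. W i w) \<and>
        alpha_regular X W q \<alpha> l SL \<and> alpha_regular X W q \<alpha> r SR)"

text \<open>Fair-split condition with window m (= number of most recent ancestors considered).
  hist lists the covariates used by the ancestors, most recent first.\<close>
fun fair_split_aux :: "nat \<Rightarrow> 'p rtree \<Rightarrow> 'p list \<Rightarrow> bool" where
  "fair_split_aux m Leaf hist = True"
| "fair_split_aux m (Node j x l r) hist =
     (((\<exists>k. k \<notin> set (take m hist)) \<longrightarrow> j \<notin> set (take m hist)) \<and>
      fair_split_aux m l (j # hist) \<and> fair_split_aux m r (j # hist))"

definition fair_split :: "real \<Rightarrow> 'p::finite rtree \<Rightarrow> bool" where
  "fair_split \<pi> tr = fair_split_aux (nat \<lfloor>\<pi> * real CARD('p)\<rfloor>) tr []"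

definition unit_cube :: "(real^'p) set" where
  "unit_cube = {x. \<forall>j. 0 \<le> x $ j \<and> x $ j \<le> 1}"

end

theory Submission
  imports Defs
begin

fun fs :: "nat \<Rightarrow> 'p list \<Rightarrow> bool" where
  "fs m [] = True"
| "fs m (j # r) = (((\<exists>k. k \<notin> set (take m r)) \<longrightarrow> j \<notin> set (take m r)) \<and> fs m r)"

lemma fs_drop: "fs m h \<Longrightarrow> fs m (drop i h)"
proof (induction h arbitrary: i)
  case Nil then show ?case by simp
next
  case (Cons a h) then show ?case by (cases i) auto
qed

lemma fs_at: assumes "fs m h" "i < length h"
  shows "((\<exists>k. k \<notin> set (take m (drop (Suc i) h))) \<longrightarrow> h ! i \<notin> set (take m (drop (Suc i) h)))"
proof -
  have "drop i h = h ! i # drop (Suc i) h" using assms(2) by (simp add: Cons_nth_drop_Suc)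
  moreover have "fs m (drop i h)" using fs_drop assms(1) by blast
  ultimately show ?thesis by simp
qed

lemma fs_window:
  fixes h :: "'p::finite list"
  assumes "fs m h" "CARD('p) \<le> m" "m + CARD('p) \<le> length h"
  shows "j \<in> set (take (m + CARD('p)) h)"
proof (rule ccontr)
  assume nj: "j \<notin> set (take (m + CARD('p)) h)"
  let ?P = "CARD('p)"
  have sub: "set (take m (drop (Suc i) h)) \<subseteq> set (take (m + ?P) h)" if "i < ?P" for i
  proof
    fix y assume "y \<in> set (take m (drop (Suc i) h))"
    then obtain k where k: "k < length (take m (drop (Suc i) h))" "take m (drop (Suc i) h) ! k = y"
      by (auto simp: in_set_conv_nth)
    have "y = h ! (Suc i + k)" using k by auto
    moreover have "Suc i + k < length h" "Suc i + k < m + ?P" using k that by auto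
    ultimately show "y \<in> set (take (m + ?P) h)" by (auto simp: in_set_conv_nth intro!: exI[of _ "Suc i + k"])
  qed
  have notin: "h ! i \<notin> set (take m (drop (Suc i) h))" if "i < ?P" for i
    using fs_at[OF assms(1), of i] sub[OF that] nj that assms by auto
  have inj: "inj_on (\<lambda>i. h ! i) {..<?P}"
  proof (rule inj_onI)
    fix a b assume ab: "a \<in> {..<?P}" "b \<in> {..<?P}" "h ! a = h ! b"
    show "a = b"
    proof (rule ccontr)
      assume "a \<noteq> b"
      then consider "a < b" | "b < a" by linarith
      then show False
      proof cases
        case 1
        have "h ! b = take m (drop (Suc a) h) ! (b - Suc a)" using 1 ab assms by auto
        moreover have "b - Suc a < length (take m (drop (Suc a) h))" using 1 ab assms by auto
        ultimately have "h ! b \<in> set (take m (drop (Suc a) h))" by (metis nth_mem)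
        then show False using notin[of a] ab by auto
      next
        case 2
        have "h ! a = take m (drop (Suc b) h) ! (a - Suc b)" using 2 ab assms by auto
        moreover have "a - Suc b < length (take m (drop (Suc b) h))" using 2 ab assms by auto
        ultimately have "h ! a \<in> set (take m (drop (Suc b) h))" by (metis nth_mem)
        then show False using notin[of b] ab by auto
      qed
    qed
  qed
  have img: "(\<lambda>i. h ! i) ` {..<?P} \<subseteq> UNIV - {j}"
  proof
    fix y assume "y \<in> (\<lambda>i. h ! i) ` {..<?P}"
    then obtain i where i: "i < ?P" "y = h ! i" by auto
    have "y \<in> set (take (m + ?P) h)" using i assms by (auto simp: in_set_conv_nth intro!: exI[of _ i])
    then show "y \<in> UNIV - {j}" using nj by auto
  qed
  have P0: "CARD('p) > 0" by simp
  have "card {..<?P} \<le> card (UNIV - {j} :: 'p set)"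
    by (rule card_inj_on_le[OF inj img]) simp
  moreover have "card (UNIV - {j} :: 'p set) = ?P - 1" by (simp add: card_Diff_singleton)
  moreover have "card {..<?P} = ?P" by simp
  ultimately show False using P0 by linarith
qed

lemma fs_count:
  fixes h :: "'p::finite list"
  assumes "fs m h" "CARD('p) \<le> m"
  shows "length h div (m + CARD('p)) \<le> count_list h j"
  using assms
proof (induction "length h" arbitrary: h rule: less_induct)
  case less
  let ?B = "m + CARD('p)"
  show ?case
  proof (cases "length h < ?B")
    case True then show ?thesis by simp
  next
    case False
    have B0: "?B > 0" by simp
    have jin: "j \<in> set (take ?B h)" using fs_window[OF less.prems] False by simp
    then have c1: "count_list (take ?B h) j \<ge> 1"
      by (metis count_list_0_iff less_one not_le)
    have "fs m (drop ?B h)" using fs_drop less.prems by blast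
    moreover have "length (drop ?B h) < length h" using False B0 by (simp, intro diff_less) auto
    ultimately have IH: "length (drop ?B h) div ?B \<le> count_list (drop ?B h) j"
      using less.hyps[of "drop ?B h"] less.prems by blast
    have "length (drop ?B h) = length h - ?B" by simp
    then have "length h div ?B = Suc (length (drop ?B h) div ?B)"
      using False B0 by (simp add: le_div_geq)
    moreover have "count_list h j = count_list (take ?B h) j + count_list (drop ?B h) j"
      by (metis append_take_drop_id count_list_append)
    ultimately show ?thesis using IH c1 by linarith
  qed
qed



lemma num_leaves_pos: "num_leaves t \<ge> 1"
  by (induction t) auto

lemma leaf_gen:
  assumes "fair_split_aux m t h" "alpha_regular X W q \<alpha> t S" "Inv S h" "fs m h"
  and step: "\<And>S h j x. Inv S h \<Longrightarrow> \<alpha> * real (card S) \<le> real (card {w\<in>S. X w $ j \<le> x}) \<Longrightarrow>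
        \<alpha> * real (card S) \<le> real (card {w\<in>S. X w $ j > x}) \<Longrightarrow>
        Inv {w\<in>S. X w $ j \<le> x} (j#h) \<and> Inv {w\<in>S. X w $ j > x} (j#h)"
  and "(C, d) \<in> leaf_clusters X t S (length h)"
  shows "\<exists>h'. length h' = d \<and> Inv C h' \<and> fs m h'"
  using assms(1-4,6)
proof (induction t arbitrary: S h)
  case Leaf
  then show ?case by auto
next
  case (Node j x l r)
  let ?SL = "{w\<in>S. X w $ j \<le> x}" and ?SR = "{w\<in>S. X w $ j > x}"
  have ar: "\<alpha> * real (card S) \<le> real (card ?SL)" "\<alpha> * real (card S) \<le> real (card ?SR)"
     "alpha_regular X W q \<alpha> l ?SL" "alpha_regular X W q \<alpha> r ?SR"
    using Node.prems(2) by (auto simp: Let_def)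
  have inv: "Inv ?SL (j#h)" "Inv ?SR (j#h)" using step[OF Node.prems(3) ar(1,2)] by auto
  have fsa: "fair_split_aux m l (j#h)" "fair_split_aux m r (j#h)"
    and fsj: "fs m (j#h)" using Node.prems(1,4) by auto
  have "(C, d) \<in> leaf_clusters X l ?SL (length (j#h)) \<or> (C, d) \<in> leaf_clusters X r ?SR (length (j#h))"
    using Node.prems(5) by auto
  then show ?case
  proof
    assume "(C, d) \<in> leaf_clusters X l ?SL (length (j#h))"
    then show ?thesis using Node.IH(1)[OF fsa(1) ar(3) inv(1) fsj] by blast
  next
    assume "(C, d) \<in> leaf_clusters X r ?SR (length (j#h))"
    then show ?thesis using Node.IH(2)[OF fsa(2) ar(4) inv(2) fsj] by blast
  qed
qed



definition lo :: "(obs \<Rightarrow> real^'p) \<Rightarrow> obs set \<Rightarrow> 'p \<Rightarrow> real" where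
  "lo X S i = Min ((\<lambda>w. X w $ i) ` S)"
definition hi :: "(obs \<Rightarrow> real^'p) \<Rightarrow> obs set \<Rightarrow> 'p \<Rightarrow> real" where
  "hi X S i = Max ((\<lambda>w. X w $ i) ` S)"

lemma lo_le: "finite S \<Longrightarrow> w \<in> S \<Longrightarrow> lo X S i \<le> X w $ i"
  unfolding lo_def by auto
lemma hi_ge: "finite S \<Longrightarrow> w \<in> S \<Longrightarrow> X w $ i \<le> hi X S i"
  unfolding hi_def by auto
lemma lo_in: "finite S \<Longrightarrow> S \<noteq> {} \<Longrightarrow> \<exists>w\<in>S. lo X S i = X w $ i"
  unfolding lo_def by (metis (no_types, lifting) Min_in finite_imageI image_iff image_is_empty)
lemma hi_in: "finite S \<Longrightarrow> S \<noteq> {} \<Longrightarrow> \<exists>w\<in>S. hi X S i = X w $ i"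
  unfolding hi_def by (metis (no_types, lifting) Max_in finite_imageI image_iff image_is_empty)
lemma lo_mono: "finite S \<Longrightarrow> A \<subseteq> S \<Longrightarrow> A \<noteq> {} \<Longrightarrow> lo X S i \<le> lo X A i"
  unfolding lo_def by (rule Min_antimono) auto
lemma hi_mono: "finite S \<Longrightarrow> A \<subseteq> S \<Longrightarrow> A \<noteq> {} \<Longrightarrow> hi X A i \<le> hi X S i"
  unfolding hi_def by (rule Max_mono) auto

definition conv :: "(obs \<Rightarrow> real^'p) \<Rightarrow> obs set \<Rightarrow> obs set \<Rightarrow> bool" where
  "conv X Obs S = (\<forall>w\<in>Obs. (\<forall>i. lo X S i \<le> X w $ i \<and> X w $ i \<le> hi X S i) \<longrightarrow> w \<in> S)"

definition Inv :: "(obs \<Rightarrow> real^'p) \<Rightarrow> obs set \<Rightarrow> real \<Rightarrow> real \<Rightarrow> nat \<Rightarrow> real \<Rightarrow> obs set \<Rightarrow> 'p list \<Rightarrow> bool" where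
  "Inv X Obs \<alpha> N K \<delta> S h = (S \<subseteq> Obs \<and> S \<noteq> {} \<and> conv X Obs S \<and> \<alpha> ^ length h * N \<le> real (card S) \<and>
     (\<forall>i. hi X S i - lo X S i \<le> (1 - \<delta>) ^ count_list (drop (length h - K) h) i))"

context
  fixes X :: "obs \<Rightarrow> real^'p::finite" and Obs :: "obs set" and n T :: nat
    and cund cbar cm M \<alpha> :: real
  assumes finObs: "finite Obs" and NT: "real (n * T) > 0"
    and X_cube: "\<forall>w\<in>Obs. X w \<in> unit_cube"
    and coverage: "\<forall>x1\<in>unit_cube. \<forall>x2\<in>unit_cube. (\<forall>j. x1 $ j \<le> x2 $ j) \<longrightarrow>
        (let V = (\<Prod>j\<in>UNIV. x2 $ j - x1 $ j);
             N = real (card {w\<in>Obs. \<forall>j. x1 $ j \<le> X w $ j \<and> X w $ j \<le> x2 $ j}) / real (n * T)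
         in cund * V - cm * M \<le> N \<and> N \<le> cbar * V + cm * M)"
    and cund: "cund > 0" and cbar: "cbar \<ge> cund" and al: "0 < \<alpha>" "\<alpha> < 1/2"
begin

lemma lo_ge0: "S \<subseteq> Obs \<Longrightarrow> S \<noteq> {} \<Longrightarrow> 0 \<le> lo X S i"
  using lo_in[of S X i] finite_subset[OF _ finObs] X_cube by (force simp: unit_cube_def)
lemma hi_le1: "S \<subseteq> Obs \<Longrightarrow> S \<noteq> {} \<Longrightarrow> hi X S i \<le> 1"
  using hi_in[of S X i] finite_subset[OF _ finObs] X_cube by (force simp: unit_cube_def)
lemma lo_le_hi: "S \<subseteq> Obs \<Longrightarrow> S \<noteq> {} \<Longrightarrow> lo X S i \<le> hi X S i"
  using lo_le[of S _ X i] hi_ge[of S _ X i] finite_subset[OF _ finObs] by fastforce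

lemma shrink_core:
  assumes S: "S \<subseteq> Obs" "S \<noteq> {}" "conv X Obs S"
    and uv: "lo X S j \<le> u" "u \<le> v" "v \<le> hi X S j"
    and A: "A \<subseteq> S" "\<forall>w\<in>A. u \<le> X w $ j \<and> X w $ j \<le> v" "\<alpha> * real (card S) \<le> real (card A)"
    and node: "cm * M \<le> \<alpha> * (real (card S) / real (n * T)) / 2"
  shows "\<alpha> * cund / (4 * cbar) * (hi X S j - lo X S j) \<le> v - u"
proof -
  have finS: "finite S" using S finite_subset finObs by blast
  define a :: "real^'p" where "a = (\<chi> i. if i = j then u else lo X S i)"
  define b :: "real^'p" where "b = (\<chi> i. if i = j then v else hi X S i)"
  define la :: "real^'p" where "la = (\<chi> i. lo X S i)"
  define hb :: "real^'p" where "hb = (\<chi> i. hi X S i)"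
  have lh: "\<And>i. lo X S i \<le> hi X S i" "\<And>i. 0 \<le> lo X S i" "\<And>i. hi X S i \<le> 1"
    using lo_le_hi lo_ge0 hi_le1 S by auto
  have abi: "0 \<le> a $ i \<and> a $ i \<le> b $ i \<and> b $ i \<le> 1" for i
    using lh(1)[of i] lh(2)[of i] lh(3)[of i] lh(1)[of j] lh(2)[of j] lh(3)[of j] uv
    unfolding a_def b_def by auto
  have ab: "a \<in> unit_cube" "b \<in> unit_cube" "\<forall>i. a $ i \<le> b $ i"
    unfolding unit_cube_def using abi by (auto intro: order.trans)
  have lahb: "la \<in> unit_cube" "hb \<in> unit_cube" "\<forall>i. la $ i \<le> hb $ i"
  proof -
    have lo1: "lo X S i \<le> 1" and hi0: "0 \<le> hi X S i" for i
      using lh(1)[of i] lh(2)[of i] lh(3)[of i] by linarith+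
    show "la \<in> unit_cube" "hb \<in> unit_cube" "\<forall>i. la $ i \<le> hb $ i"
      using lh lo1 hi0 unfolding la_def hb_def unit_cube_def by auto
  qed
  define Q where "Q = (\<Prod>i\<in>UNIV - {j}. hi X S i - lo X S i)"
  have Q0: "Q \<ge> 0" unfolding Q_def using lh by (auto intro: prod_nonneg)
  have Vab: "(\<Prod>i\<in>UNIV. b $ i - a $ i) = (v - u) * Q"
  proof -
    have "(\<Prod>i\<in>UNIV. b $ i - a $ i) = (b $ j - a $ j) * (\<Prod>i\<in>UNIV - {j}. b $ i - a $ i)"
      by (simp add: prod.remove)
    also have "(\<Prod>i\<in>UNIV - {j}. b $ i - a $ i) = Q" unfolding Q_def a_def b_def
      by (rule prod.cong) auto
    finally show ?thesis by (simp add: a_def b_def)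
  qed
  have VS: "(\<Prod>i\<in>UNIV. hb $ i - la $ i) = (hi X S j - lo X S j) * Q"
  proof -
    have "(\<Prod>i\<in>UNIV. hb $ i - la $ i) = (hb $ j - la $ j) * (\<Prod>i\<in>UNIV - {j}. hb $ i - la $ i)"
      by (simp add: prod.remove)
    also have "(\<Prod>i\<in>UNIV - {j}. hb $ i - la $ i) = Q" unfolding Q_def la_def hb_def
      by (rule prod.cong) auto
    finally show ?thesis by (simp add: la_def hb_def)
  qed
  have setS: "{w\<in>Obs. \<forall>i. la $ i \<le> X w $ i \<and> X w $ i \<le> hb $ i} = S"
    using S(1,3) lo_le[OF finS] hi_ge[OF finS] unfolding conv_def la_def hb_def by auto
  have setA: "A \<subseteq> {w\<in>Obs. \<forall>i. a $ i \<le> X w $ i \<and> X w $ i \<le> b $ i}"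
    using A S(1) lo_le[OF finS] hi_ge[OF finS] unfolding a_def b_def by fastforce
  have cardA: "card A \<le> card {w\<in>Obs. \<forall>i. a $ i \<le> X w $ i \<and> X w $ i \<le> b $ i}"
    by (rule card_mono[OF _ setA]) (use finObs in auto)
  define \<sigma> where "\<sigma> = real (card S) / real (n * T)"
  have c1: "\<alpha> * \<sigma> \<le> cbar * ((v - u) * Q) + cm * M"
  proof -
    have "real (card {w\<in>Obs. \<forall>i. a $ i \<le> X w $ i \<and> X w $ i \<le> b $ i}) / real (n * T) \<le> cbar * ((v - u) * Q) + cm * M"
    proof -
      have "let V = (\<Prod>i\<in>UNIV. b $ i - a $ i);
             N = real (card {w\<in>Obs. \<forall>i. a $ i \<le> X w $ i \<and> X w $ i \<le> b $ i}) / real (n * T)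
         in cund * V - cm * M \<le> N \<and> N \<le> cbar * V + cm * M"
        using coverage ab by blast
      then show ?thesis unfolding Let_def Vab by linarith
    qed
    moreover have "\<alpha> * \<sigma> \<le> real (card {w\<in>Obs. \<forall>i. a $ i \<le> X w $ i \<and> X w $ i \<le> b $ i}) / real (n * T)"
    proof -
      have "\<alpha> * real (card S) \<le> real (card {w\<in>Obs. \<forall>i. a $ i \<le> X w $ i \<and> X w $ i \<le> b $ i})"
        using A(3) cardA by (meson of_nat_mono order.trans)
      then have "\<alpha> * real (card S) / real (n * T) \<le> real (card {w\<in>Obs. \<forall>i. a $ i \<le> X w $ i \<and> X w $ i \<le> b $ i}) / real (n * T)"
        using NT by (intro divide_right_mono) auto
      then show ?thesis unfolding \<sigma>_def by simp
    qed
    ultimately show ?thesis by linarith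
  qed
  have c2: "cund * ((hi X S j - lo X S j) * Q) - cm * M \<le> \<sigma>"
  proof -
    have "let V = (\<Prod>i\<in>UNIV. hb $ i - la $ i);
             N = real (card {w\<in>Obs. \<forall>i. la $ i \<le> X w $ i \<and> X w $ i \<le> hb $ i}) / real (n * T)
         in cund * V - cm * M \<le> N \<and> N \<le> cbar * V + cm * M"
      using coverage lahb by blast
    then show ?thesis unfolding Let_def VS setS \<sigma>_def by linarith
  qed
  have node': "cm * M \<le> \<alpha> * \<sigma> / 2" using node unfolding \<sigma>_def by simp
  have sig: "\<sigma> > 0" unfolding \<sigma>_def using NT finS S(2) by (simp add: card_gt_0_iff)
  have cb: "cbar > 0" using cund cbar by linarith
  have eQ: "cbar * ((v - u) * Q) \<ge> \<alpha> * \<sigma> / 2" using c1 node' by linarith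
  have as0: "\<alpha> * \<sigma> / 2 > 0" using al sig by simp
  have Qp: "Q > 0"
  proof (rule ccontr)
    assume "\<not> Q > 0"
    then have "Q = 0" using Q0 by simp
    then show False using eQ as0 by simp
  qed
  define w where "w = hi X S j - lo X S j"
  have "\<alpha> * \<sigma> \<le> 1/2 * \<sigma>" using al sig by (intro mult_right_mono) auto
  then have wQ: "cund * (w * Q) \<le> 5 / 4 * \<sigma>" using c2 node' unfolding w_def by linarith
  have "\<alpha> * cund / (4 * cbar) * w * Q * cbar = \<alpha> / 4 * (cund * (w * Q))" using cb by (simp add: field_simps)
  also have "\<dots> \<le> \<alpha> / 4 * (5 / 4 * \<sigma>)" using wQ al by (intro mult_left_mono) auto
  also have "\<dots> \<le> \<alpha> * \<sigma> / 2" using al sig by (simp add: field_simps)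
  also have "\<dots> \<le> (v - u) * Q * cbar" using eQ by (simp add: field_simps)
  finally have "\<alpha> * cund / (4 * cbar) * w * (Q * cbar) \<le> (v - u) * (Q * cbar)" by (simp add: mult.assoc)
  then have "\<alpha> * cund / (4 * cbar) * w \<le> v - u" using Qp cb by (simp add: mult_le_cancel_right pos_divide_le_eq)
  then show ?thesis unfolding w_def .
qed

lemma inv_step:
  fixes K :: nat
  defines "\<delta> \<equiv> \<alpha> * cund / (4 * cbar)"
  assumes nodeK: "\<forall>k<K. cm * M \<le> \<alpha> * \<alpha> ^ k / 2"
    and I: "Inv X Obs \<alpha> (real (n * T)) K \<delta> S h"
    and cL: "\<alpha> * real (card S) \<le> real (card {w\<in>S. X w $ j \<le> x})"
    and cR: "\<alpha> * real (card S) \<le> real (card {w\<in>S. X w $ j > x})"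
  shows "Inv X Obs \<alpha> (real (n * T)) K \<delta> {w\<in>S. X w $ j \<le> x} (j#h) \<and>
         Inv X Obs \<alpha> (real (n * T)) K \<delta> {w\<in>S. X w $ j > x} (j#h)"
proof -
  let ?SL = "{w\<in>S. X w $ j \<le> x}" and ?SR = "{w\<in>S. X w $ j > x}"
  let ?k = "length h"
  have S: "S \<subseteq> Obs" "S \<noteq> {}" "conv X Obs S" "\<alpha> ^ ?k * real (n * T) \<le> real (card S)"
    and W: "\<And>i. hi X S i - lo X S i \<le> (1 - \<delta>) ^ count_list (drop (?k - K) h) i"
    using I unfolding Inv_def by auto
  have finS: "finite S" using S finite_subset finObs by blast
  have cS: "real (card S) > 0" using finS S(2) by (simp add: card_gt_0_iff)
  have ne: "?SL \<noteq> {}" "?SR \<noteq> {}"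
  proof -
    have "real (card ?SL) > 0" "real (card ?SR) > 0" using cL cR cS al by (smt (verit) mult_pos_pos)+
    then have "card ?SL > 0" "card ?SR > 0" by simp_all
    then show "?SL \<noteq> {}" "?SR \<noteq> {}" by (metis card_gt_0_iff)+
  qed
  have fin: "finite ?SL" "finite ?SR" using finS by auto
  have "\<alpha> * cund \<le> 1/2 * cund" using al cund by (intro mult_right_mono) auto
  then have "\<alpha> * cund \<le> 1 * (4 * cbar)" using cund cbar by linarith
  then have d0: "0 \<le> \<delta>" "\<delta> \<le> 1" using al cund cbar unfolding \<delta>_def
    by (simp_all add: pos_divide_le_eq)
  have hiL: "hi X ?SL j \<le> x" using hi_in[OF fin(1) ne(1), of X j] by auto
  have loR: "x < lo X ?SR j" using lo_in[OF fin(2) ne(2), of X j] by auto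
  have sub: "?SL \<subseteq> S" "?SR \<subseteq> S" by auto
  have SLO: "?SL \<subseteq> Obs" "?SR \<subseteq> Obs" using S(1) by auto
  have convL: "conv X Obs ?SL" unfolding conv_def
  proof (intro ballI impI)
    fix w assume w: "w \<in> Obs" "\<forall>i. lo X ?SL i \<le> X w $ i \<and> X w $ i \<le> hi X ?SL i"
    have "\<forall>i. lo X S i \<le> X w $ i \<and> X w $ i \<le> hi X S i"
    proof
      fix i
      have a: "lo X S i \<le> lo X ?SL i" by (rule lo_mono[OF finS sub(1) ne(1)])
      have b: "hi X ?SL i \<le> hi X S i" by (rule hi_mono[OF finS sub(1) ne(1)])
      show "lo X S i \<le> X w $ i \<and> X w $ i \<le> hi X S i" using a b w(2)[rule_format, of i] by linarith
    qed
    then have "w \<in> S" using S(3) w(1) unfolding conv_def by blast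
    moreover have "X w $ j \<le> x" using w(2)[rule_format, of j] hiL by linarith
    ultimately show "w \<in> ?SL" by simp
  qed
  have convR: "conv X Obs ?SR" unfolding conv_def
  proof (intro ballI impI)
    fix w assume w: "w \<in> Obs" "\<forall>i. lo X ?SR i \<le> X w $ i \<and> X w $ i \<le> hi X ?SR i"
    have "\<forall>i. lo X S i \<le> X w $ i \<and> X w $ i \<le> hi X S i"
    proof
      fix i
      have a: "lo X S i \<le> lo X ?SR i" by (rule lo_mono[OF finS sub(2) ne(2)])
      have b: "hi X ?SR i \<le> hi X S i" by (rule hi_mono[OF finS sub(2) ne(2)])
      show "lo X S i \<le> X w $ i \<and> X w $ i \<le> hi X S i" using a b w(2)[rule_format, of i] by linarith
    qed
    then have "w \<in> S" using S(3) w(1) unfolding conv_def by blast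
    moreover have "x < X w $ j" using w(2)[rule_format, of j] loR by linarith
    ultimately show "w \<in> ?SR" by simp
  qed
  have cardL: "\<alpha> ^ length (j#h) * real (n * T) \<le> real (card ?SL)"
  proof -
    have "\<alpha> ^ length (j#h) * real (n * T) = \<alpha> * (\<alpha> ^ ?k * real (n * T))" by simp
    also have "\<dots> \<le> \<alpha> * real (card S)" using S(4) al by (intro mult_left_mono) auto
    finally show ?thesis using cL by linarith
  qed
  have cardR: "\<alpha> ^ length (j#h) * real (n * T) \<le> real (card ?SR)"
  proof -
    have "\<alpha> ^ length (j#h) * real (n * T) = \<alpha> * (\<alpha> ^ ?k * real (n * T))" by simp
    also have "\<dots> \<le> \<alpha> * real (card S)" using S(4) al by (intro mult_left_mono) auto
    finally show ?thesis using cR by linarith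
  qed
  have shrink: "hi X ?SL j - lo X ?SL j \<le> (1 - \<delta>) * (hi X S j - lo X S j) \<and>
                hi X ?SR j - lo X ?SR j \<le> (1 - \<delta>) * (hi X S j - lo X S j)" if kK: "?k < K"
  proof -
    have "cm * M \<le> \<alpha> * \<alpha> ^ ?k / 2" using nodeK kK by blast
    also have "\<dots> \<le> \<alpha> * (real (card S) / real (n * T)) / 2"
      using S(4) NT al by (simp add: field_simps)
    finally have node: "cm * M \<le> \<alpha> * (real (card S) / real (n * T)) / 2" .
    have l1: "lo X S j \<le> lo X ?SL j" "lo X ?SL j \<le> hi X ?SL j" "hi X ?SL j \<le> hi X S j"
      using lo_mono[OF finS sub(1) ne(1)] hi_mono[OF finS sub(1) ne(1)] lo_le_hi[OF SLO(1) ne(1), of j] by auto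
    have l2: "lo X S j \<le> lo X ?SR j" "lo X ?SR j \<le> hi X ?SR j" "hi X ?SR j \<le> hi X S j"
      using lo_mono[OF finS sub(2) ne(2)] hi_mono[OF finS sub(2) ne(2)] lo_le_hi[OF SLO(2) ne(2), of j] by auto
    have A1: "\<forall>w\<in>?SL. lo X S j \<le> X w $ j \<and> X w $ j \<le> hi X ?SL j"
      using lo_le[OF finS, where X=X and i=j] hi_ge[OF fin(1), where X=X and i=j] by blast
    have A2: "\<forall>w\<in>?SR. lo X ?SR j \<le> X w $ j \<and> X w $ j \<le> hi X S j"
      using lo_le[OF fin(2), where X=X and i=j] hi_ge[OF finS, where X=X and i=j] by blast
    have e1: "\<delta> * (hi X S j - lo X S j) \<le> hi X ?SL j - lo X S j"
      unfolding \<delta>_def by (rule shrink_core[OF S(1-3) order.refl order.trans[OF l1(1,2)] l1(3) sub(1) A1 cL node])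
    have e2: "\<delta> * (hi X S j - lo X S j) \<le> hi X S j - lo X ?SR j"
      unfolding \<delta>_def by (rule shrink_core[OF S(1-3) l2(1) order.trans[OF l2(2,3)] order.refl sub(2) A2 cR node])
    show ?thesis using e1 e2 hiL loR l1 l2 by (simp add: algebra_simps)
  qed
  have wid: "hi X T' i - lo X T' i \<le> (1 - \<delta>) ^ count_list (drop (length (j#h) - K) (j#h)) i"
    if T': "T' \<subseteq> S" "T' \<noteq> {}" "T' = ?SL \<or> T' = ?SR" for T' i
  proof -
    have mono: "hi X T' i - lo X T' i \<le> hi X S i - lo X S i"
      using lo_mono[OF finS T'(1,2), where X=X and i=i] hi_mono[OF finS T'(1,2), where X=X and i=i] by linarith
    show ?thesis
    proof (cases "?k < K")
      case False
      then have "drop (length (j#h) - K) (j#h) = drop (?k - K) h"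
        by (simp add: Suc_diff_le)
      then show ?thesis using mono W[of i] by simp
    next
      case True
      then have dr: "drop (length (j#h) - K) (j#h) = j # drop (?k - K) h" by simp
      show ?thesis
      proof (cases "i = j")
        case False
        then show ?thesis using mono W[of i] dr by simp
      next
        case ij: True
        have "hi X T' j - lo X T' j \<le> (1 - \<delta>) * (hi X S j - lo X S j)"
          using shrink[OF True] T'(3) by auto
        also have "\<dots> \<le> (1 - \<delta>) * (1 - \<delta>) ^ count_list (drop (?k - K) h) j"
          using W[of j] d0 by (intro mult_left_mono) auto
        finally show ?thesis using dr ij by simp
      qed
    qed
  qed
  show ?thesis unfolding Inv_def
    using sub ne S(1) convL convR cardL cardR wid[of ?SL] wid[of ?SR] by auto
qed

end


lemma exp_half_le2: "exp (1/2 :: real) \<le> 2"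
proof -
  have "exp (1/2 :: real) ^ 2 = exp 1" by (simp add: power2_eq_square flip: exp_add)
  also have "\<dots> \<le> 2 ^ 2" using exp_le by simp
  finally show ?thesis by (rule power2_le_imp_le) simp
qed

lemma final_bound:
  fixes \<delta> y s l :: real and cnt :: nat
  assumes "0 < \<delta>" "\<delta> \<le> 1/2" "l \<ge> 1" "real cnt \<ge> y - 1" "y * \<delta> = s * ln l"
  shows "(1 - \<delta>) ^ cnt \<le> 2 / l powr s"
proof -
  have "1 - \<delta> \<le> exp (-\<delta>)" using exp_ge_add_one_self[of "-\<delta>"] by simp
  then have "(1 - \<delta>) ^ cnt \<le> exp (-\<delta>) ^ cnt" using assms by (intro power_mono) auto
  also have "\<dots> = exp (real cnt * (-\<delta>))" by (rule exp_of_nat_mult[symmetric])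
  also have "\<dots> \<le> exp (\<delta> - s * ln l)"
  proof -
    have "real cnt * \<delta> \<ge> (y - 1) * \<delta>" using assms by (intro mult_right_mono) auto
    then show ?thesis using assms(5) by (simp add: algebra_simps)
  qed
  also have "\<dots> = exp \<delta> * inverse (exp (s * ln l))" by (simp add: exp_diff field_simps)
  also have "\<dots> \<le> 2 * inverse (exp (s * ln l))"
  proof -
    have "exp \<delta> \<le> exp (1/2)" using assms by simp
    then have "exp \<delta> \<le> 2" using exp_half_le2 by linarith
    then show ?thesis by (intro mult_right_mono) auto
  qed
  also have "\<dots> = 2 / l powr s" using assms(3) by (simp add: powr_def divide_inverse)
  finally show ?thesis .
qed

lemma norm_bound:
  fixes x :: "real^'p::finite"
  assumes "\<forall>i. \<bar>x $ i\<bar> \<le> r"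
  shows "norm x \<le> sqrt (real CARD('p)) * r"
proof -
  have r0: "0 \<le> r" using assms by (meson abs_ge_zero order.trans)
  have "norm x = sqrt (\<Sum>i\<in>UNIV. (x $ i)\<^sup>2)" by (simp add: norm_vec_def L2_set_def)
  also have "(\<Sum>i\<in>UNIV. (x $ i)\<^sup>2) \<le> real CARD('p) * r\<^sup>2"
  proof -
    have "(x $ i)\<^sup>2 \<le> r\<^sup>2" for i using assms r0
      by (metis abs_le_square_iff abs_of_nonneg)
    then show ?thesis using sum_bounded_above[of UNIV "\<lambda>i. (x $ i)\<^sup>2" "r\<^sup>2"] by simp
  qed
  then have "sqrt (\<Sum>i\<in>UNIV. (x $ i)\<^sup>2) \<le> sqrt (real CARD('p) * r\<^sup>2)" by simp
  also have "\<dots> = sqrt (real CARD('p)) * r" using r0 by (simp add: real_sqrt_mult)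
  finally show ?thesis .
qed



theorem theorem1:
  fixes n T q :: nat
    and \<alpha> \<pi> c cbar cund cm :: real
    and X :: "obs \<Rightarrow> real^'p::finite"
    and W :: "nat \<Rightarrow> obs \<Rightarrow> bool"
    and tr :: "'p rtree"
    and Tstar :: "nat \<Rightarrow> real^'p \<Rightarrow> real"
    and L :: "nat \<Rightarrow> real"
  defines "M \<equiv> sqrt (ln (real (n * T)) * (real CARD('p) + 1) / real (min n T))"
      and "Obs \<equiv> {(z, t). z < n \<and> t < T}"
      and "nleaves \<equiv> num_leaves tr"
      and "s \<equiv> c / ((\<pi> + 1) * real CARD('p)) * (\<alpha> * cund / (4 * cbar))"
  assumes "n \<ge> 1" and "T \<ge> 1"
    and "0 < \<alpha>" and "\<alpha> < 1/2" and "\<pi> > 1" and "c > 0"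
    and "cund > 0" and "cbar \<ge> cund" and "cm > 0"
    and X_cube: "\<forall>w\<in>Obs. X w \<in> unit_cube"
    and coverage: "\<forall>x1\<in>unit_cube. \<forall>x2\<in>unit_cube. (\<forall>j. x1 $ j \<le> x2 $ j) \<longrightarrow>
        (let V = (\<Prod>j\<in>UNIV. x2 $ j - x1 $ j);
             N = real (card {w\<in>Obs. \<forall>j. x1 $ j \<le> X w $ j \<and> X w $ j \<le> x2 $ j}) / real (n * T)
         in cund * V - cm * M \<le> N \<and> N \<le> cbar * V + cm * M)"
    and "alpha_regular X W q \<alpha> tr Obs"
    and "fair_split \<pi> tr"
    and depth: "\<forall>(C, d)\<in>leaf_clusters X tr Obs 0. real d \<ge> c * ln (real nleaves)"
    and leaves: "real nleaves \<le> (\<alpha> / (2 * cm * M)) powr (1 / (c * ln (1 / \<alpha>)))"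
    and lip: "\<forall>i<q. lipschitz_on (L i) unit_cube (Tstar i)"
  shows "\<forall>i<q. \<forall>(C, d)\<in>leaf_clusters X tr Obs 0. \<forall>a\<in>C. \<forall>b\<in>C.
           \<bar>Tstar i (X a) - Tstar i (X b)\<bar> \<le> 2 * L i * sqrt (real CARD('p)) / real nleaves powr s"
proof -
  let ?P = "CARD('p)"
  define m where "m = nat \<lfloor>\<pi> * real ?P\<rfloor>"
  define \<delta> where "\<delta> = \<alpha> * cund / (4 * cbar)"
  define D where "D = c * ln (real nleaves)"
  define K where "K = nat \<lfloor>D\<rfloor> + 1"
  have l1: "real nleaves \<ge> 1" unfolding nleaves_def using num_leaves_pos by simp
  have D0: "D \<ge> 0" unfolding D_def using l1 \<open>c > 0\<close> by simp
  have ObsE: "Obs = {..<n} \<times> {..<T}" unfolding Obs_def by auto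
  have finObs: "finite Obs" unfolding ObsE by simp
  have cardObs: "card Obs = n * T" unfolding ObsE by (simp add: card_cartesian_product)
  have NT: "real (n * T) > 0" using \<open>n \<ge> 1\<close> \<open>T \<ge> 1\<close> by simp
  have "(0, 0) \<in> Obs" unfolding Obs_def using \<open>n \<ge> 1\<close> \<open>T \<ge> 1\<close> by auto
  then have Obs_ne: "Obs \<noteq> {}" by auto
  have cb: "cbar > 0" using \<open>cund > 0\<close> \<open>cbar \<ge> cund\<close> by linarith
  have al: "0 < \<alpha>" "\<alpha> < 1/2" by fact+
  have \<delta>pos: "0 < \<delta>" unfolding \<delta>_def using al \<open>cund > 0\<close> cb by simp
  have \<delta>le: "\<delta> \<le> 1/2"
  proof -
    have "\<alpha> * cund \<le> 1/2 * cund" using al \<open>cund > 0\<close> by (intro mult_right_mono) auto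
    then have "\<alpha> * cund \<le> 1/2 * (4 * cbar)" using \<open>cund > 0\<close> \<open>cbar \<ge> cund\<close> by linarith
    then show ?thesis unfolding \<delta>_def using cb by (simp add: pos_divide_le_eq)
  qed
  have "n * T \<ge> 1" using \<open>n \<ge> 1\<close> \<open>T \<ge> 1\<close> by (simp add: Suc_le_eq)
  then have "ln (real (n * T)) \<ge> 0" by (intro ln_ge_zero) linarith
  then have M0: "M \<ge> 0" unfolding M_def by simp
  define A where "A = \<alpha> / (2 * cm * M)"
  define e where "e = 1 / (c * ln (1 / \<alpha>))"
  have lnal: "ln (1 / \<alpha>) > 0" using al by simp
  have e0: "e > 0" unfolding e_def using lnal \<open>c > 0\<close> by simp
  have lvs: "real nleaves \<le> A powr e" using leaves unfolding A_def e_def .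
  have Mpos: "M > 0"
  proof (rule ccontr)
    assume "\<not> M > 0"
    then have "M = 0" using M0 by simp
    then have "A = 0" unfolding A_def by simp
    then show False using lvs l1 by simp
  qed
  have Apos: "A > 0" unfolding A_def using al \<open>cm > 0\<close> Mpos by simp
  have "ln (real nleaves) \<le> ln (A powr e)" using lvs l1 Apos by (simp del: ln_powr)
  also have "\<dots> = e * ln A" by simp
  finally have "ln (real nleaves) \<le> e * ln A" .
  then have "c * ln (real nleaves) * ln (1 / \<alpha>) \<le> c * (e * ln A) * ln (1 / \<alpha>)"
    using \<open>c > 0\<close> lnal by (intro mult_right_mono mult_left_mono) auto
  also have "\<dots> = ln A" unfolding e_def using \<open>c > 0\<close> lnal by (simp add: field_simps)
  finally have DlnA: "D * ln (1 / \<alpha>) \<le> ln A" unfolding D_def .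
  have aD: "\<alpha> powr D \<ge> 1 / A"
  proof -
    have "\<alpha> powr D = exp (- (D * ln (1 / \<alpha>)))" using al by (simp add: powr_def ln_div)
    also have "\<dots> \<ge> exp (- ln A)" using DlnA by simp
    finally show ?thesis using Apos by (simp add: exp_minus divide_inverse)
  qed
  have cmM: "cm * M \<le> \<alpha> / 2 * \<alpha> powr D"
  proof -
    have "cm * M = \<alpha> / 2 * (1 / A)" unfolding A_def using \<open>cm > 0\<close> Mpos al by (simp add: field_simps)
    also have "\<dots> \<le> \<alpha> / 2 * \<alpha> powr D" using aD al by (intro mult_left_mono) auto
    finally show ?thesis .
  qed
  have nodeK: "\<forall>k<K. cm * M \<le> \<alpha> * \<alpha> ^ k / 2"
  proof (intro allI impI)
    fix k assume "k < K"
    then have "k \<le> nat \<lfloor>D\<rfloor>" unfolding K_def by simp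
    then have "int k \<le> \<lfloor>D\<rfloor>" using D0 by (simp add: le_nat_iff)
    then have "real k \<le> D" by (metis le_floor_iff of_int_of_nat_eq)
    then have "\<alpha> powr D \<le> \<alpha> powr real k" using al by (intro powr_mono') auto
    also have "\<dots> = \<alpha> ^ k" using al by (simp add: powr_realpow)
    finally have "\<alpha> / 2 * \<alpha> powr D \<le> \<alpha> / 2 * \<alpha> ^ k" using al by (intro mult_left_mono) auto
    then show "cm * M \<le> \<alpha> * \<alpha> ^ k / 2" using cmM by simp
  qed
  have root: "Inv X Obs \<alpha> (real (n * T)) K \<delta> Obs []"
    unfolding Inv_def
  proof (intro conjI allI)
    show "Obs \<subseteq> Obs" "Obs \<noteq> {}" by (auto simp: Obs_ne)
    show "conv X Obs Obs" unfolding conv_def by auto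
    show "\<alpha> ^ length [] * real (n * T) \<le> real (card Obs)" using cardObs by simp
    fix i
    have "hi X Obs i \<le> 1" "0 \<le> lo X Obs i"
      using hi_le1[OF finObs NT X_cube coverage \<open>cund > 0\<close> \<open>cbar \<ge> cund\<close> al order.refl Obs_ne]
            lo_ge0[OF finObs NT X_cube coverage \<open>cund > 0\<close> \<open>cbar \<ge> cund\<close> al order.refl Obs_ne] by auto
    then show "hi X Obs i - lo X Obs i \<le> (1 - \<delta>) ^ count_list (drop (length [] - K) []) i" by simp
  qed
  have Pm: "?P \<le> m"
  proof -
    have "real ?P \<le> \<pi> * real ?P" using \<open>\<pi> > 1\<close> by simp
    then show ?thesis unfolding m_def by (simp add: le_nat_floor)
  qed
  have mP: "real (m + ?P) \<le> (\<pi> + 1) * real ?P"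
  proof -
    have fl0: "0 \<le> \<lfloor>\<pi> * real ?P\<rfloor>" using \<open>\<pi> > 1\<close> by simp
    have "real m = real_of_int \<lfloor>\<pi> * real ?P\<rfloor>" unfolding m_def using fl0 by simp
    also have "\<dots> \<le> \<pi> * real ?P" by (rule of_int_floor_le)
    finally have "real m \<le> \<pi> * real ?P" .
    then show ?thesis by (simp add: algebra_simps)
  qed
  have main: "\<forall>a\<in>C. \<forall>b\<in>C. \<bar>Tstar i (X a) - Tstar i (X b)\<bar> \<le> 2 * L i * sqrt (real CARD('p)) / real nleaves powr s"
    if iq: "i < q" and Cd0: "(C, d) \<in> leaf_clusters X tr Obs 0" for i C d
  proof -
    have Cd': "(C, d) \<in> leaf_clusters X tr Obs (length [])" using Cd0 by simp
    have dD: "real d \<ge> D" using depth Cd' unfolding D_def by auto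
    have fsa: "fair_split_aux m tr []" using \<open>fair_split \<pi> tr\<close> unfolding fair_split_def m_def .
    have stp: "\<And>S h j x. Inv X Obs \<alpha> (real (n * T)) K \<delta> S h \<Longrightarrow>
        \<alpha> * real (card S) \<le> real (card {w\<in>S. X w $ j \<le> x}) \<Longrightarrow>
        \<alpha> * real (card S) \<le> real (card {w\<in>S. X w $ j > x}) \<Longrightarrow>
        Inv X Obs \<alpha> (real (n * T)) K \<delta> {w\<in>S. X w $ j \<le> x} (j#h) \<and>
        Inv X Obs \<alpha> (real (n * T)) K \<delta> {w\<in>S. X w $ j > x} (j#h)"
      unfolding \<delta>_def by (rule inv_step[OF finObs NT X_cube coverage \<open>cund > 0\<close> \<open>cbar \<ge> cund\<close> al nodeK])
    have fs0: "fs m []" by simp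
    obtain h' where h': "length h' = d" "Inv X Obs \<alpha> (real (n * T)) K \<delta> C h'" "fs m h'"
      using leaf_gen[where Inv = "Inv X Obs \<alpha> (real (n * T)) K \<delta>", OF fsa \<open>alpha_regular X W q \<alpha> tr Obs\<close> root fs0 stp Cd']
      by blast
    have CObs: "C \<subseteq> Obs" and Cne: "C \<noteq> {}" and
      W: "\<And>j. hi X C j - lo X C j \<le> (1 - \<delta>) ^ count_list (drop (d - K) h') j"
      using h' unfolding Inv_def by auto
    have finC: "finite C" using CObs finObs finite_subset by blast
    define y where "y = D / ((\<pi> + 1) * real ?P)"
    have coord: "\<bar>X a $ j - X b $ j\<bar> \<le> 2 / real nleaves powr s" if ab: "a \<in> C" "b \<in> C" for a b j
    proof -
      let ?g = "drop (d - K) h'"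
      have lg: "length ?g = min d K" using h'(1) by simp
      have cnt: "min d K div (m + ?P) \<le> count_list ?g j"
        using fs_count[OF fs_drop[OF h'(3)] Pm, of "d - K" j] lg by simp
      have B0: "m + ?P > 0" by simp
      have "real (min d K) \<ge> D"
      proof -
        have "real (nat \<lfloor>D\<rfloor>) = real_of_int \<lfloor>D\<rfloor>" using D0 by simp
        moreover have "D < real_of_int \<lfloor>D\<rfloor> + 1" by (rule real_of_int_floor_add_one_gt)
        ultimately have "real K > D" unfolding K_def of_nat_add of_nat_1 by linarith
        then show ?thesis using dD by linarith
      qed
      have "real (min d K) / real (m + ?P) - 1 \<le> real (min d K div (m + ?P))"
      proof -
        have e1: "min d K = (m + ?P) * (min d K div (m + ?P)) + min d K mod (m + ?P)" by simp
        have e2: "min d K mod (m + ?P) < m + ?P" using B0 by simp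
        have r1: "real (min d K) = real (m + ?P) * real (min d K div (m + ?P)) + real (min d K mod (m + ?P))"
          using e1 by (metis of_nat_add of_nat_mult)
        have r2: "real (min d K mod (m + ?P)) < real (m + ?P)" using e2 by (simp only: of_nat_less_iff)
        have "real (min d K) \<le> (real (min d K div (m + ?P)) + 1) * real (m + ?P)"
          using r1 r2 by (simp add: algebra_simps)
        then have "real (min d K) / real (m + ?P) \<le> real (min d K div (m + ?P)) + 1"
          using B0 by (simp only: pos_divide_le_eq[OF of_nat_0_less_iff[THEN iffD2, OF B0]])
        then show ?thesis by linarith
      qed
      moreover have "y \<le> real (min d K) / real (m + ?P)"
      proof -
        have p1: "(\<pi> + 1) * real ?P > 0" using \<open>\<pi> > 1\<close> by simp
        have p2: "real (m + ?P) > 0" using B0 by (simp only: of_nat_0_less_iff)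
        have "y \<le> D / real (m + ?P)" unfolding y_def
          by (rule divide_left_mono[OF mP D0 mult_pos_pos[OF p1 p2]])
        also have "\<dots> \<le> real (min d K) / real (m + ?P)" using \<open>real (min d K) \<ge> D\<close> B0
          by (intro divide_right_mono) auto
        finally show ?thesis .
      qed
      moreover have "real (min d K div (m + ?P)) \<le> real (count_list ?g j)" using cnt by (rule of_nat_mono)
      ultimately have cy: "real (count_list ?g j) \<ge> y - 1" by linarith
      have sd: "s = c / ((\<pi> + 1) * real ?P) * \<delta>" unfolding s_def \<delta>_def by simp
      have ys: "y * \<delta> = s * ln (real nleaves)"
        unfolding y_def sd D_def by (simp add: mult_ac)
      have "\<bar>X a $ j - X b $ j\<bar> \<le> hi X C j - lo X C j"
        using lo_le[OF finC ab(1), where X=X and i=j] hi_ge[OF finC ab(1), where X=X and i=j]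
          lo_le[OF finC ab(2), where X=X and i=j] hi_ge[OF finC ab(2), where X=X and i=j]
        unfolding abs_le_iff by linarith
      also have "\<dots> \<le> (1 - \<delta>) ^ count_list ?g j" by (rule W)
      also have "\<dots> \<le> 2 / real nleaves powr s" by (rule final_bound[OF \<delta>pos \<delta>le l1 cy ys])
      finally show ?thesis .
    qed
    show "\<forall>a\<in>C. \<forall>b\<in>C. \<bar>Tstar i (X a) - Tstar i (X b)\<bar> \<le> 2 * L i * sqrt (real CARD('p)) / real nleaves powr s"
    proof (intro ballI)
      fix a b assume ab: "a \<in> C" "b \<in> C"
      have lipi: "lipschitz_on (L i) unit_cube (Tstar i)" using lip iq by blast
      have cube: "X a \<in> unit_cube" "X b \<in> unit_cube" using X_cube CObs ab by auto
      have Li: "L i \<ge> 0" using lipschitz_on_nonneg[OF lipi] .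
      have "dist (X a) (X b) \<le> sqrt (real ?P) * (2 / real nleaves powr s)"
        unfolding dist_norm by (rule norm_bound) (use coord[OF ab] in simp)
      then have "\<bar>Tstar i (X a) - Tstar i (X b)\<bar> \<le> L i * (sqrt (real ?P) * (2 / real nleaves powr s))"
      proof -
        have "dist (Tstar i (X a)) (Tstar i (X b)) \<le> L i * dist (X a) (X b)" by (rule lipschitz_onD[OF lipi cube])
        also have "\<dots> \<le> L i * (sqrt (real ?P) * (2 / real nleaves powr s))" using Li \<open>dist (X a) (X b) \<le> _\<close> by (rule mult_left_mono[rotated])
        finally show ?thesis by (simp add: dist_real_def)
      qed
      moreover have "L i * (sqrt (real ?P) * (2 / real nleaves powr s)) = 2 * L i * sqrt (real CARD('p)) / real nleaves powr s"
        by (simp add: mult_ac)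
      ultimately show "\<bar>Tstar i (X a) - Tstar i (X b)\<bar> \<le> 2 * L i * sqrt (real CARD('p)) / real nleaves powr s"
        by (rule ord_le_eq_trans)
    qed
  qed
  show ?thesis using main by blast
qed


end
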